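(* For disjunctive guarded systems of type $(A,B)$ and every LTL formula without the next operator $h(A,B_1)$: for all $n\ge1$, if $(A,B)^{(1,n)}\models\mathsf E_{uncond}\,h(A,B_1)$ then $(A,B)^{(1,n+1)}\models\mathsf E_{uncond}\,h(A,B_1)$.
   Context: A process template is $U=(Q_U,\mathit{init}_U,\Sigma_U,\delta_U)$ with finite states $Q_U$, initial state $\mathit{init}_U$, finite input alphabet $\Sigma_U$ and guarded transitions $\delta_U\subseteq Q_U\times\Sigma_U\times 2^{Q_A\cup Q_B}\times Q_U$; templates $A,B$ have disjoint state sets and disjoint alphabets, and $|B|=|Q_B|$. The system $(A,B)^{(1,n)}$ consists of one copy of $A$ and $n$ copies $B_1,\dots,B_n$ of $B$; a global state $s$ gives each process a local state, a global input $e$ gives each process an input letter, and initially all processes are in their initial states. In a disjunctive system a guard $g$ is satisfied for process $p$ in $s$ iff some process $p'\ne p$ has $s(p')\in g$. A local transition $(q,\sigma,g,q')$ of $p$ is enabled for $(s,e)$ if $s(p)=q$, $e(p)=\sigma$ and $g$ is satisfied for $p$ in $s$; a global step changes the state of exactly one process along an enabled transition. A path is a sequence of configurations $(s_1,e_1,p_1),(s_2,e_2,p_2),\dots$ where $p_t$ makes the step from $s_t$ to $s_{t+1}$ under $e_t$, a configuration $(s,e,\bot)$ occurs (as the last one) exactly when all processes are disabled, and $e_{t+1}(p)=e_t(p)$ for every process $p$ not moving at moment $t$. A run is a maximal path from the initial state. A run is unconditionally fair if it is infinite and every process moves infinitely often. For an LTL formula $h(A,B_1)$ without next operator over atomic propositions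 from $Q_A\cup\Sigma_A$ and $(Q_B\cup\Sigma_B)\times\{1\}$ (interpreted on the local states and inputs of $A$ and $B_1$), $(A,B)^{(1,n)}\models\mathsf E_{uncond}\,h(A,B_1)$ means some unconditionally fair run satisfies $h$. *)

theory Defs
  imports Main
begin

text \<open>Guards are sets of local states of
  either template; Q_A and Q_B are disjoint because they live in the two summands
  of the sum type 'qa + 'qb (similarly the alphabets live in distinct types).\<close>

record ('q, 's, 'g) template =
  states :: "'q set"
  init   :: "'q"
  alph   :: "'s set"
  trans  :: "('q \<times> 's \<times> 'g set \<times> 'q) set"

type_synonym ('qa, 'sa, 'qb) templA = "('qa, 'sa, 'qa + 'qb) template"
type_synonym ('qb, 'sb, 'qa) templB = "('qb, 'sb, 'qa + 'qb) template"

definition guard_states ::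
  "('qa, 'sa, 'qa + 'qb) template \<Rightarrow> ('qb, 'sb, 'qa + 'qb) template \<Rightarrow> ('qa + 'qb) set" where
  "guard_states A B = Inl ` states A \<union> Inr ` states B"

definition template_wf ::
  "('q, 's, 'g) template \<Rightarrow> 'g set \<Rightarrow> bool" where
  "template_wf U G \<longleftrightarrow> finite (states U) \<and> init U \<in> states U \<and> finite (alph U) \<and>
     trans U \<subseteq> states U \<times> alph U \<times> Pow G \<times> states U"

datatype proc = PA | PB nat

definition procs :: "nat \<Rightarrow> proc set" where
  "procs n = insert PA (PB ` {1..n})"

text \<open>Global state: local state of A and of every B_i; global input: letter of A
  and of every B_i. (Values at indices outside 1..n are irrelevant.)\<close>
type_synonym ('qa, 'qb) gstate = "'qa \<times> (nat \<Rightarrow> 'qb)"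
type_synonym ('sa, 'sb) ginput = "'sa \<times> (nat \<Rightarrow> 'sb)"

fun loc :: "('qa, 'qb) gstate \<Rightarrow> proc \<Rightarrow> 'qa + 'qb" where
  "loc s PA = Inl (fst s)"
| "loc s (PB i) = Inr (snd s i)"

fun inp :: "('sa, 'sb) ginput \<Rightarrow> proc \<Rightarrow> 'sa + 'sb" where
  "inp e PA = Inl (fst e)"
| "inp e (PB i) = Inr (snd e i)"

definition init_state ::
  "('qa, 'sa, 'qa + 'qb) template \<Rightarrow> ('qb, 'sb, 'qa + 'qb) template \<Rightarrow> ('qa, 'qb) gstate" where
  "init_state A B = (init A, \<lambda>_. init B)"

definition valid_input ::
  "('qa, 'sa, 'qa + 'qb) template \<Rightarrow> ('qb, 'sb, 'qa + 'qb) template \<Rightarrow> nat \<Rightarrow> ('sa, 'sb) ginput \<Rightarrow> bool" where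
  "valid_input A B n e \<longleftrightarrow> fst e \<in> alph A \<and> (\<forall>i\<in>{1..n}. snd e i \<in> alph B)"

definition guard_sat :: "nat \<Rightarrow> ('qa, 'qb) gstate \<Rightarrow> proc \<Rightarrow> ('qa + 'qb) set \<Rightarrow> bool" where
  "guard_sat n s p g \<longleftrightarrow> (\<exists>p'\<in>procs n. p' \<noteq> p \<and> loc s p' \<in> g)"

fun gstep ::
  "('qa, 'sa, 'qa + 'qb) template \<Rightarrow> ('qb, 'sb, 'qa + 'qb) template \<Rightarrow> nat \<Rightarrow>
   ('qa, 'qb) gstate \<Rightarrow> ('sa, 'sb) ginput \<Rightarrow> proc \<Rightarrow> ('qa, 'qb) gstate \<Rightarrow> bool" where
  "gstep A B n s e PA s' \<longleftrightarrow>
     (\<exists>g q'. (fst s, fst e, g, q') \<in> trans A \<and> guard_sat n s PA g \<and> s' = (q', snd s))"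
| "gstep A B n s e (PB i) s' \<longleftrightarrow> i \<in> {1..n} \<and>
     (\<exists>g q'. (snd s i, snd e i, g, q') \<in> trans B \<and> guard_sat n s (PB i) g \<and>
             s' = (fst s, (snd s)(i := q')))"

definition enabled ::
  "('qa, 'sa, 'qa + 'qb) template \<Rightarrow> ('qb, 'sb, 'qa + 'qb) template \<Rightarrow> nat \<Rightarrow>
   ('qa, 'qb) gstate \<Rightarrow> ('sa, 'sb) ginput \<Rightarrow> proc \<Rightarrow> bool" where
  "enabled A B n s e p \<longleftrightarrow> (\<exists>s'. gstep A B n s e p s')"

definition all_disabled ::
  "('qa, 'sa, 'qa + 'qb) template \<Rightarrow> ('qb, 'sb, 'qa + 'qb) template \<Rightarrow> nat \<Rightarrow>
   ('qa, 'qb) gstate \<Rightarrow> ('sa, 'sb) ginput \<Rightarrow> bool" where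
  "all_disabled A B n s e \<longleftrightarrow> (\<forall>p\<in>procs n. \<not> enabled A B n s e p)"

text \<open>Configurations (s, e, p) with p = None standing for \<bottom>.\<close>
type_synonym ('qa, 'sa, 'qb, 'sb) config = "('qa, 'qb) gstate \<times> ('sa, 'sb) ginput \<times> proc option"

definition cstate :: "('qa, 'sa, 'qb, 'sb) config \<Rightarrow> ('qa, 'qb) gstate" where
  "cstate c = fst c"
definition cinput :: "('qa, 'sa, 'qb, 'sb) config \<Rightarrow> ('sa, 'sb) ginput" where
  "cinput c = fst (snd c)"
definition cproc :: "('qa, 'sa, 'qb, 'sb) config \<Rightarrow> proc option" where
  "cproc c = snd (snd c)"

definition moves ::
  "('qa, 'sa, 'qa + 'qb) template \<Rightarrow> ('qb, 'sb, 'qa + 'qb) template \<Rightarrow> nat \<Rightarrow>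
   (nat \<Rightarrow> ('qa, 'sa, 'qb, 'sb) config) \<Rightarrow> nat \<Rightarrow> bool" where
  "moves A B n \<rho> t \<longleftrightarrow> (\<exists>p\<in>procs n. cproc (\<rho> t) = Some p \<and>
      gstep A B n (cstate (\<rho> t)) (cinput (\<rho> t)) p (cstate (\<rho> (Suc t))) \<and>
      (\<forall>q\<in>procs n. q \<noteq> p \<longrightarrow> inp (cinput (\<rho> (Suc t))) q = inp (cinput (\<rho> t)) q))"

text \<open>A run: a maximal path from the initial state. It is either infinite (every
  configuration has a moving process), or finite, ending (at position k) with a
  configuration (s, e, \<bottom>) in which all processes are disabled; positions after k
  are irrelevant.\<close>
definition is_run ::
  "('qa, 'sa, 'qa + 'qb) template \<Rightarrow> ('qb, 'sb, 'qa + 'qb) template \<Rightarrow> nat \<Rightarrow>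
   (nat \<Rightarrow> ('qa, 'sa, 'qb, 'sb) config) \<Rightarrow> bool" where
  "is_run A B n \<rho> \<longleftrightarrow> cstate (\<rho> 0) = init_state A B \<and>
     ((\<forall>t. valid_input A B n (cinput (\<rho> t)) \<and> moves A B n \<rho> t) \<or>
      (\<exists>k. cproc (\<rho> k) = None \<and> all_disabled A B n (cstate (\<rho> k)) (cinput (\<rho> k)) \<and>
           (\<forall>t\<le>k. valid_input A B n (cinput (\<rho> t))) \<and>
           (\<forall>t<k. moves A B n \<rho> t)))"

definition uncond_fair :: "nat \<Rightarrow> (nat \<Rightarrow> ('qa, 'sa, 'qb, 'sb) config) \<Rightarrow> bool" where
  "uncond_fair n \<rho> \<longleftrightarrow> (\<forall>t. cproc (\<rho> t) \<noteq> None) \<and>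
     (\<forall>p\<in>procs n. \<exists>\<^sub>\<infinity>t. cproc (\<rho> t) = Some p)"

datatype ('qa, 'sa, 'qb, 'sb) atom =
    AState 'qa | AInput 'sa | B1State 'qb | B1Input 'sb

datatype 'ap ltlx =
    LTrue
  | Atom 'ap
  | Neg "'ap ltlx"
  | Conj "'ap ltlx" "'ap ltlx"
  | Until "'ap ltlx" "'ap ltlx"

fun atom_holds :: "('qa, 'sa, 'qb, 'sb) atom \<Rightarrow> ('qa, 'sa, 'qb, 'sb) config \<Rightarrow> bool" where
  "atom_holds (AState q) c \<longleftrightarrow> fst (cstate c) = q"
| "atom_holds (AInput a) c \<longleftrightarrow> fst (cinput c) = a"
| "atom_holds (B1State q) c \<longleftrightarrow> snd (cstate c) 1 = q"
| "atom_holds (B1Input a) c \<longleftrightarrow> snd (cinput c) 1 = a"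

fun ltl_sat :: "(nat \<Rightarrow> ('qa, 'sa, 'qb, 'sb) config) \<Rightarrow> nat \<Rightarrow>
                 ('qa, 'sa, 'qb, 'sb) atom ltlx \<Rightarrow> bool" where
  "ltl_sat \<rho> i LTrue = True"
| "ltl_sat \<rho> i (Atom a) = atom_holds a (\<rho> i)"
| "ltl_sat \<rho> i (Neg \<phi>) = (\<not> ltl_sat \<rho> i \<phi>)"
| "ltl_sat \<rho> i (Conj \<phi> \<psi>) = (ltl_sat \<rho> i \<phi> \<and> ltl_sat \<rho> i \<psi>)"
| "ltl_sat \<rho> i (Until \<phi> \<psi>) = (\<exists>j\<ge>i. ltl_sat \<rho> j \<psi> \<and> (\<forall>k. i \<le> k \<and> k < j \<longrightarrow> ltl_sat \<rho> k \<phi>))"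

definition models_E_uncond ::
  "('qa, 'sa, 'qa + 'qb) template \<Rightarrow> ('qb, 'sb, 'qa + 'qb) template \<Rightarrow> nat \<Rightarrow>
   ('qa, 'sa, 'qb, 'sb) atom ltlx \<Rightarrow> bool" where
  "models_E_uncond A B n h \<longleftrightarrow> (\<exists>\<rho>. is_run A B n \<rho> \<and> uncond_fair n \<rho> \<and> ltl_sat \<rho> 0 h)"

end

theory Submission
  imports Defs
begin


lemma ivt_step:
  fixes \<pi> :: "nat \<Rightarrow> nat"
  assumes mono: "mono \<pi>" and st: "\<And>j. \<pi> (Suc j) \<le> Suc (\<pi> j)"
  shows "\<pi> j \<le> u \<Longrightarrow> u < \<pi> j' \<Longrightarrow> \<exists>k. j \<le> k \<and> k < j' \<and> \<pi> k = u"
proof (induction j')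
  case 0
  then have "j > 0 \<or> j = 0" by auto
  moreover have "\<pi> 0 \<le> \<pi> j" using mono by (simp add: mono_def)
  ultimately show ?case using 0 by auto
next
  case (Suc j'')
  show ?case
  proof (cases "u < \<pi> j''")
    case True
    then show ?thesis using Suc by (meson less_Suc_eq)
  next
    case False
    then have u: "u = \<pi> j''" using Suc.prems st[of j''] by auto
    have "j \<le> j''"
    proof (rule ccontr)
      assume "\<not> j \<le> j''"
      then have "Suc j'' \<le> j" by auto
      then have "\<pi> (Suc j'') \<le> \<pi> j" using mono by (simp add: mono_def)
      then show False using Suc.prems by auto
    qed
    then show ?thesis using u by auto
  qed
qed

lemma stutter:
  fixes \<pi> :: "nat \<Rightarrow> nat"
  assumes mono: "mono \<pi>" and st: "\<And>j. \<pi> (Suc j) \<le> Suc (\<pi> j)"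
    and sur: "\<And>t. \<exists>j. \<pi> j = t"
    and at: "\<And>j a. atom_holds a (\<rho>' j) = atom_holds a (\<rho> (\<pi> j))"
  shows "ltl_sat \<rho>' j \<phi> = ltl_sat \<rho> (\<pi> j) \<phi>"
proof (induction \<phi> arbitrary: j)
  case (Until \<phi>1 \<phi>2)
  show ?case
  proof
    assume "ltl_sat \<rho>' j (Until \<phi>1 \<phi>2)"
    then obtain j' where j': "j' \<ge> j" "ltl_sat \<rho>' j' \<phi>2"
      "\<forall>k. j \<le> k \<and> k < j' \<longrightarrow> ltl_sat \<rho>' k \<phi>1" by auto
    have "\<pi> j' \<ge> \<pi> j" using j' mono by (simp add: mono_def)
    moreover have "ltl_sat \<rho> (\<pi> j') \<phi>2" using j' Until by auto
    moreover have "\<forall>u. \<pi> j \<le> u \<and> u < \<pi> j' \<longrightarrow> ltl_sat \<rho> u \<phi>1"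
    proof (intro allI impI)
      fix u assume "\<pi> j \<le> u \<and> u < \<pi> j'"
      then obtain k where "j \<le> k" "k < j'" "\<pi> k = u" using ivt_step[OF mono st] by blast
      then show "ltl_sat \<rho> u \<phi>1" using j' Until by auto
    qed
    ultimately show "ltl_sat \<rho> (\<pi> j) (Until \<phi>1 \<phi>2)" by auto
  next
    assume "ltl_sat \<rho> (\<pi> j) (Until \<phi>1 \<phi>2)"
    then obtain t' where t': "t' \<ge> \<pi> j" "ltl_sat \<rho> t' \<phi>2"
      "\<forall>k. \<pi> j \<le> k \<and> k < t' \<longrightarrow> ltl_sat \<rho> k \<phi>1" by auto
    obtain j0 where j0: "\<pi> j0 = t'" using sur by blast
    have ex: "\<exists>j'. j \<le> j' \<and> \<pi> j' = t'"
    proof (cases "j \<le> j0")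
      case True then show ?thesis using j0 by auto
    next
      case False
      then have "\<pi> j0 \<le> \<pi> j" using mono by (simp add: mono_def)
      then show ?thesis using t' j0 by auto
    qed
    define j' where "j' = (LEAST j'. j \<le> j' \<and> \<pi> j' = t')"
    have j'p: "j \<le> j' \<and> \<pi> j' = t'" unfolding j'_def using LeastI_ex[OF ex] .
    have "\<forall>k. j \<le> k \<and> k < j' \<longrightarrow> ltl_sat \<rho>' k \<phi>1"
    proof (intro allI impI)
      fix k assume k: "j \<le> k \<and> k < j'"
      have "\<pi> k \<noteq> t'" using k not_less_Least[of k "\<lambda>j'. j \<le> j' \<and> \<pi> j' = t'"] unfolding j'_def by auto
      moreover have "\<pi> k \<le> \<pi> j'" "\<pi> j \<le> \<pi> k" using k mono by (auto simp: mono_def)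
      ultimately show "ltl_sat \<rho>' k \<phi>1" using Until t' j'p by auto
    qed
    then show "ltl_sat \<rho>' j (Until \<phi>1 \<phi>2)" using j'p t' Until by auto
  qed
qed (auto simp: at)



definition dup :: "nat \<Rightarrow> ('a \<times> (nat \<Rightarrow> 'b)) \<Rightarrow> ('a \<times> (nat \<Rightarrow> 'b))" where
  "dup n x = (fst x, (snd x)(Suc n := snd x 1))"

lemma procs_Suc: "procs (Suc n) = insert (PB (Suc n)) (procs n)"
  by (auto simp: procs_def)

lemma PB_procs: "PB i \<in> procs n \<longleftrightarrow> 1 \<le> i \<and> i \<le> n"
  by (auto simp: procs_def)

lemma procs_mono: "procs n \<subseteq> procs (Suc n)" by (auto simp: procs_Suc)

lemma loc_dup: "p \<in> procs n \<Longrightarrow> loc (dup n s) p = loc s p"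
  by (cases p) (auto simp: dup_def PB_procs)

lemma inp_dup: "p \<in> procs n \<Longrightarrow> inp (dup n e) p = inp e p"
  by (cases p) (auto simp: dup_def PB_procs)

lemma guard_mono:
  assumes "guard_sat n s p g"
    and "\<And>p'. p' \<in> procs n \<Longrightarrow> p' \<noteq> p \<Longrightarrow> p' \<noteq> p2 \<and> loc s2 p' = loc s p'"
    and "procs n \<subseteq> procs m"
  shows "guard_sat m s2 p2 g"
  using assms unfolding guard_sat_def by fastforce

lemma L1:
  assumes "p \<in> procs n" "p \<noteq> PB 1" "gstep A B n s e p s'"
    "\<forall>q\<in>procs n. q \<noteq> p \<longrightarrow> inp e' q = inp e q" "n \<ge> 1"
  shows "gstep A B (Suc n) (dup n s) (dup n e) p (dup n s') \<and>
    (\<forall>q\<in>procs (Suc n). q \<noteq> p \<longrightarrow> inp (dup n e') q = inp (dup n e) q)"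
proof
  have gm: "guard_sat (Suc n) (dup n s) p g" if "guard_sat n s p g" for g
    using that apply (rule guard_mono)
    using loc_dup[of _ n s] procs_mono[of n] by (auto simp: PB_procs simp del: loc.simps)
  show "gstep A B (Suc n) (dup n s) (dup n e) p (dup n s')"
  proof (cases p)
    case PA
    then show ?thesis using assms gm by (auto simp: dup_def)
  next
    case (PB i)
    then obtain g q' where "(snd s i, snd e i, g, q') \<in> trans B" "guard_sat n s (PB i) g"
       "s' = (fst s, (snd s)(i := q'))" "1 \<le> i" "i \<le> n"
      using assms by auto
    moreover have "i \<noteq> 1" using PB assms by auto
    ultimately show ?thesis using PB gm
      by (auto simp: dup_def fun_upd_twist intro!: exI[of _ g] exI[of _ q'])
  qed
  show "\<forall>q\<in>procs (Suc n). q \<noteq> p \<longrightarrow> inp (dup n e') q = inp (dup n e) q"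
  proof (intro ballI impI)
    fix q assume q: "q \<in> procs (Suc n)" "q \<noteq> p"
    show "inp (dup n e') q = inp (dup n e) q"
    proof (cases "q = PB (Suc n)")
      case True
      have "PB 1 \<in> procs n" using assms by (auto simp: PB_procs)
      then have "inp e' (PB 1) = inp e (PB 1)" using assms by auto
      then show ?thesis using True by (auto simp: dup_def)
    next
      case False
      then have "q \<in> procs n" using q by (auto simp: procs_Suc)
      then show ?thesis using q assms by (simp add: inp_dup)
    qed
  qed
qed

lemma L2:
  assumes "gstep A B n s e (PB 1) s'"
    "\<forall>q\<in>procs n. q \<noteq> PB 1 \<longrightarrow> inp e' q = inp e q" "n \<ge> 1"
  shows "gstep A B (Suc n) (dup n s) (dup n e) (PB 1) (fst s', (snd s')(Suc n := snd s 1)) \<and>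
    (\<forall>q\<in>procs (Suc n). q \<noteq> PB 1 \<longrightarrow> inp (fst e', (snd e')(Suc n := snd e 1)) q = inp (dup n e) q)"
proof
  have gm: "guard_sat (Suc n) (dup n s) (PB 1) g" if "guard_sat n s (PB 1) g" for g
    using that apply (rule guard_mono)
    using loc_dup[of _ n s] procs_mono[of n] by (auto simp: PB_procs simp del: loc.simps)
  obtain g q' where "(snd s 1, snd e 1, g, q') \<in> trans B" "guard_sat n s (PB 1) g"
       "s' = (fst s, (snd s)(1 := q'))"
      using assms by auto
  then show "gstep A B (Suc n) (dup n s) (dup n e) (PB 1) (fst s', (snd s')(Suc n := snd s 1))"
    using gm assms(3) by (auto simp: dup_def fun_upd_twist intro!: exI[of _ g] exI[of _ q'])
  show "\<forall>q\<in>procs (Suc n). q \<noteq> PB 1 \<longrightarrow> inp (fst e', (snd e')(Suc n := snd e 1)) q = inp (dup n e) q"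
  proof (intro ballI impI)
    fix q assume q: "q \<in> procs (Suc n)" "q \<noteq> PB 1"
    show "inp (fst e', (snd e')(Suc n := snd e 1)) q = inp (dup n e) q"
    proof (cases "q = PB (Suc n)")
      case True
      then show ?thesis by (auto simp: dup_def)
    next
      case False
      then have "q \<in> procs n" using q by (auto simp: procs_Suc)
      then show ?thesis using q assms False by (cases q) (auto simp: dup_def)
    qed
  qed
qed

lemma L3:
  assumes "gstep A B n s e (PB 1) s'" "n \<ge> 1"
  shows "gstep A B (Suc n) (fst s', (snd s')(Suc n := snd s 1)) (fst e', (snd e')(Suc n := snd e 1))
           (PB (Suc n)) (dup n s') \<and>
    (\<forall>q\<in>procs (Suc n). q \<noteq> PB (Suc n) \<longrightarrow> inp (dup n e') q = inp (fst e', (snd e')(Suc n := snd e 1)) q)"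
proof
  obtain g q' where gq: "(snd s 1, snd e 1, g, q') \<in> trans B" "guard_sat n s (PB 1) g"
       "s' = (fst s, (snd s)(1 := q'))"
      using assms by auto
  have "guard_sat (Suc n) (fst s', (snd s')(Suc n := snd s 1)) (PB (Suc n)) g"
    using gq(2) apply (rule guard_mono)
    subgoal for p' using gq(3) by (cases p') (auto simp: PB_procs)
    using procs_mono by auto
  then show "gstep A B (Suc n) (fst s', (snd s')(Suc n := snd s 1)) (fst e', (snd e')(Suc n := snd e 1))
           (PB (Suc n)) (dup n s')"
    using gq assms(2) by (auto simp: dup_def intro!: exI[of _ g] exI[of _ q'])
  show "\<forall>q\<in>procs (Suc n). q \<noteq> PB (Suc n) \<longrightarrow> inp (dup n e') q = inp (fst e', (snd e')(Suc n := snd e 1)) q"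
  proof (intro ballI impI)
    fix q assume q: "q \<in> procs (Suc n)" "q \<noteq> PB (Suc n)"
    then show "inp (dup n e') q = inp (fst e', (snd e')(Suc n := snd e 1)) q"
      by (cases q) (auto simp: dup_def)
  qed
qed



fun gpos :: "(nat \<Rightarrow> ('qa, 'sa, 'qb, 'sb) config) \<Rightarrow> nat \<Rightarrow> nat \<times> bool" where
  "gpos \<rho> 0 = (0, False)"
| "gpos \<rho> (Suc j) = (case gpos \<rho> j of (t, False) \<Rightarrow>
      (if cproc (\<rho> t) = Some (PB 1) then (t, True) else (Suc t, False))
    | (t, True) \<Rightarrow> (Suc t, False))"

definition newcfg :: "nat \<Rightarrow> (nat \<Rightarrow> ('qa, 'sa, 'qb, 'sb) config) \<Rightarrow> nat \<times> bool \<Rightarrow> ('qa, 'sa, 'qb, 'sb) config" where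
  "newcfg n \<rho> tb = (case tb of (t, False) \<Rightarrow> (dup n (cstate (\<rho> t)), dup n (cinput (\<rho> t)), cproc (\<rho> t))
     | (t, True) \<Rightarrow> ((fst (cstate (\<rho> (Suc t))), (snd (cstate (\<rho> (Suc t))))(Suc n := snd (cstate (\<rho> t)) 1)),
                    (fst (cinput (\<rho> (Suc t))), (snd (cinput (\<rho> (Suc t))))(Suc n := snd (cinput (\<rho> t)) 1)),
                    Some (PB (Suc n))))"

definition ppos :: "(nat \<Rightarrow> ('qa, 'sa, 'qb, 'sb) config) \<Rightarrow> nat \<Rightarrow> nat" where
  "ppos \<rho> j = (case gpos \<rho> j of (t, b) \<Rightarrow> if b then Suc t else t)"

lemma gpos_le: "fst (gpos \<rho> j) \<le> j"
  by (induction j) (auto split: prod.splits bool.splits)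

lemma gpos_True: "gpos \<rho> j = (t, True) \<Longrightarrow> cproc (\<rho> t) = Some (PB 1)"
  by (induction j) (auto split: prod.splits bool.splits if_splits)

lemma gpos_ex: "\<exists>j. gpos \<rho> j = (t, False)"
proof (induction t)
  case 0 then show ?case by (auto intro: exI[of _ 0])
next
  case (Suc t)
  then obtain j where j: "gpos \<rho> j = (t, False)" by blast
  show ?case
  proof (cases "cproc (\<rho> t) = Some (PB 1)")
    case True
    then have "gpos \<rho> (Suc (Suc j)) = (Suc t, False)" using j by simp
    then show ?thesis by blast
  next
    case False
    then have "gpos \<rho> (Suc j) = (Suc t, False)" using j by simp
    then show ?thesis by blast
  qed
qed

lemma gpos_ex_True: "cproc (\<rho> t) = Some (PB 1) \<Longrightarrow> \<exists>j. gpos \<rho> j = (t, True)"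
proof -
  assume a: "cproc (\<rho> t) = Some (PB 1)"
  obtain j where j: "gpos \<rho> j = (t, False)" using gpos_ex by blast
  then have "gpos \<rho> (Suc j) = (t, True)" using a by simp
  then show ?thesis by blast
qed

lemma ppos_Suc: "ppos \<rho> (Suc j) = ppos \<rho> j \<or> ppos \<rho> (Suc j) = Suc (ppos \<rho> j)"
  by (auto simp: ppos_def split: prod.splits bool.splits)

lemma ppos_mono: "mono (ppos \<rho>)"
  unfolding mono_iff_le_Suc using ppos_Suc by (metis le_SucI order_refl)

lemma ppos_sur: "\<exists>j. ppos \<rho> j = t"
proof -
  obtain j where "gpos \<rho> j = (t, False)" using gpos_ex by blast
  then have "ppos \<rho> j = t" by (simp add: ppos_def)
  then show ?thesis by blast
qed

lemma atoms_new:
  assumes "n \<ge> 1"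
  shows "atom_holds a (newcfg n \<rho> (gpos \<rho> j)) = atom_holds a (\<rho> (ppos \<rho> j))"
  using assms
  by (cases a) (auto simp: newcfg_def ppos_def dup_def cstate_def cinput_def split: prod.splits bool.splits)



theorem mainTheorem6:
  fixes A :: "('qa, 'sa, 'qa + 'qb) template"
    and B :: "('qb, 'sb, 'qa + 'qb) template"
    and h :: "('qa, 'sa, 'qb, 'sb) atom ltlx"
    and n :: nat
  assumes "template_wf A (guard_states A B)"
    and "template_wf B (guard_states A B)"
    and "n \<ge> 1"
    and "models_E_uncond A B n h"
  shows "models_E_uncond A B (n + 1) h"
proof -
  have n1: "n \<ge> 1" by fact
  obtain \<rho> where run: "is_run A B n \<rho>" and fair: "uncond_fair n \<rho>" and sat: "ltl_sat \<rho> 0 h"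
    using assms(4) unfolding models_E_uncond_def by blast
  have nN: "\<forall>t. cproc (\<rho> t) \<noteq> None" and inf: "\<forall>p\<in>procs n. \<exists>\<^sub>\<infinity>t. cproc (\<rho> t) = Some p"
    using fair by (auto simp: uncond_fair_def)
  have init: "cstate (\<rho> 0) = init_state A B" using run by (simp add: is_run_def)
  have inf_run: "\<forall>t. valid_input A B n (cinput (\<rho> t)) \<and> moves A B n \<rho> t"
    using run nN unfolding is_run_def by auto
  have PB1: "PB 1 \<in> procs n" using n1 by (simp add: PB_procs)
  define \<rho>' where "\<rho>' = (\<lambda>j. newcfg n \<rho> (gpos \<rho> j))"
  have sat': "ltl_sat \<rho>' 0 h"
  proof -
    have "ltl_sat \<rho>' 0 h = ltl_sat \<rho> (ppos \<rho> 0) h"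
      apply (rule stutter[OF ppos_mono])
      using ppos_Suc ppos_sur atoms_new[OF n1] unfolding \<rho>'_def by (metis le_SucI order_refl)+
    then show ?thesis using sat by (simp add: ppos_def)
  qed
  have init': "cstate (\<rho>' 0) = init_state A B"
    using init by (auto simp: \<rho>'_def newcfg_def dup_def init_state_def cstate_def fun_eq_iff)
  have valid': "valid_input A B (Suc n) (cinput (\<rho>' j))" for j
  proof (cases "gpos \<rho> j")
    case (Pair t b)
    have v: "valid_input A B n (cinput (\<rho> t))" "valid_input A B n (cinput (\<rho> (Suc t)))"
      using inf_run by auto
    have "snd (cinput (\<rho> t)) 1 \<in> alph B" using v n1 by (auto simp: valid_input_def)
    then show ?thesis using Pair v
      by (cases b) (auto simp: \<rho>'_def newcfg_def dup_def valid_input_def cinput_def)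
  qed
  have moves': "moves A B (Suc n) \<rho>' j" for j
  proof (cases "gpos \<rho> j")
    case (Pair t b)
    obtain p where p: "p \<in> procs n" "cproc (\<rho> t) = Some p"
      "gstep A B n (cstate (\<rho> t)) (cinput (\<rho> t)) p (cstate (\<rho> (Suc t)))"
      "\<forall>q\<in>procs n. q \<noteq> p \<longrightarrow> inp (cinput (\<rho> (Suc t))) q = inp (cinput (\<rho> t)) q"
      using inf_run unfolding moves_def by blast
    show ?thesis
    proof (cases b)
      case True
      then have "p = PB 1" using gpos_True[of \<rho> j t] Pair p by simp
      then have "gpos \<rho> (Suc j) = (Suc t, False)" using Pair True by simp
      then show ?thesis using L3[OF p(3)[unfolded \<open>p = PB 1\<close>] n1, of "cinput (\<rho> (Suc t))"] Pair True
        unfolding moves_def \<rho>'_def newcfg_def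
        by (auto simp: cstate_def cinput_def cproc_def procs_Suc)
    next
      case False
      show ?thesis
      proof (cases "p = PB 1")
        case True
        then have "gpos \<rho> (Suc j) = (t, True)" using Pair False p by simp
        then show ?thesis using L2[OF p(3)[unfolded True] p(4)[unfolded True] n1] Pair False p True
          unfolding moves_def \<rho>'_def newcfg_def
          by (auto simp: cstate_def cinput_def cproc_def procs_Suc)
      next
        case np: False
        then have "gpos \<rho> (Suc j) = (Suc t, False)" using Pair False p by simp
        then show ?thesis using L1[OF p(1) np p(3) p(4) n1] Pair False p procs_mono[of n]
          unfolding moves_def \<rho>'_def newcfg_def
          by (auto simp: cstate_def cinput_def cproc_def)
      qed
    qed
  qed
  have run': "is_run A B (Suc n) \<rho>'"
    unfolding is_run_def using init' valid' moves' by blast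
  have nN': "cproc (\<rho>' j) \<noteq> None" for j
    using nN by (cases "gpos \<rho> j") (auto simp: \<rho>'_def newcfg_def cproc_def split: bool.splits)
  have inf': "\<exists>\<^sub>\<infinity>j. cproc (\<rho>' j) = Some p" if p: "p \<in> procs (Suc n)" for p
    unfolding cofinite_eq_sequentially frequently_sequentially
  proof
    fix m
    show "\<exists>j\<ge>m. cproc (\<rho>' j) = Some p"
    proof (cases "p = PB (Suc n)")
      case True
      obtain t where t: "t \<ge> m" "cproc (\<rho> t) = Some (PB 1)"
        using inf PB1 unfolding cofinite_eq_sequentially frequently_sequentially by blast
      obtain j where j: "gpos \<rho> j = (t, True)" using gpos_ex_True[of \<rho> t, OF t(2)] by blast
      have "j \<ge> m" using gpos_le[of \<rho> j] j t by simp
      moreover have "cproc (\<rho>' j) = Some p" using j True by (simp add: \<rho>'_def newcfg_def cproc_def)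
      ultimately show ?thesis by blast
    next
      case False
      then have "p \<in> procs n" using p by (simp add: procs_Suc)
      then obtain t where t: "t \<ge> m" "cproc (\<rho> t) = Some p"
        using inf unfolding cofinite_eq_sequentially frequently_sequentially by blast
      obtain j where j: "gpos \<rho> j = (t, False)" using gpos_ex by blast
      have "j \<ge> m" using gpos_le[of \<rho> j] j t by simp
      moreover have "cproc (\<rho>' j) = Some p" using j t by (simp add: \<rho>'_def newcfg_def cproc_def)
      ultimately show ?thesis by blast
    qed
  qed
  have "uncond_fair (Suc n) \<rho>'" unfolding uncond_fair_def using nN' inf' by blast
  then show ?thesis unfolding models_E_uncond_def using run' sat' by auto
qed


end
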